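(* Let $\mathfrak{m}$ be a maximal ideal of $K(\!(\mathbf{t})\!)^\circ$ and define, for $I,J\in\mathbb{N}^m$, \[ I\preceq_{\mathfrak m}J\quad\Longleftrightarrow\quad \frac{\mathbf{t}^I}{\mathbf{t}^I+\mathbf{t}^J}\notin\mathfrak{m}. \] Then $\preceq_{\mathfrak m}$ is a monomial order on $\mathbb{N}^m$: it is a total order (reflexive, antisymmetric, transitive, any two elements comparable) with $0\preceq_{\mathfrak m}J$ for all $J$ and $I\preceq_{\mathfrak m}J\Rightarrow I+L\preceq_{\mathfrak m}J+L$ for all $L\in\mathbb{N}^m$.
   Context: $K$ is a field of characteristic zero, $\mathbf{t}=(t_1,\dots,t_m)$, $K(\!(\mathbf{t})\!)=\operatorname{Frac}K[\![\mathbf{t}]\!]$. $V\mathbb{B}[\mathbf{t}]$ is the semiring of subsets of $\mathbb{N}^m$ equal to the vertex set of their Newton polyhedron $\operatorname{conv}(\cdot)+\mathbb{R}^m_{\ge0}$, with $a\oplus b$ = vertices of the Newton polyhedron of $a\cup b$, $a\odot b$ = vertices of that of $a+b$; $V\mathbb{B}(\mathbf{t})$ is its fraction semifield, ordered by $a/b\le c/d$ iff $a\odot d\oplus b\odot c=b\odot c$. $\operatorname{trop}(f)$ is the vertex set of the Newton polyhedron of $\operatorname{Supp}(f)$, $\operatorname{trop}(f/g)=\operatorname{trop}(f)/\operatorname{trop}(g)$, and $K(\!(\mathbf{t})\!)^\circ=\{q:\operatorname{trop}(q)\le1\}$. *)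

theory Defs
  imports "HOL-Analysis.Analysis" "HOL-Algebra.Ideal"
begin

text \<open>Exponent vectors in N^m are functions 'n => nat for a finite index type 'n
  (m = CARD('n)).  Formal power series in K[[t_1..t_m]] are arbitrary coefficient
  functions ('n => nat) => 'k.\<close>

type_synonym 'n expo = "'n \<Rightarrow> nat"
type_synonym ('n, 'k) mps = "'n expo \<Rightarrow> 'k"

definition expo_add :: "'n expo \<Rightarrow> 'n expo \<Rightarrow> 'n expo" where
  "expo_add I J = (\<lambda>i. I i + J i)"

definition expo_zero :: "'n expo" where
  "expo_zero = (\<lambda>i. 0)"

definition mps_zero :: "('n, 'k::field) mps" where
  "mps_zero = (\<lambda>I. 0)"

definition mps_add :: "('n, 'k::field) mps \<Rightarrow> ('n, 'k) mps \<Rightarrow> ('n, 'k) mps" where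
  "mps_add f g = (\<lambda>I. f I + g I)"

text \<open>Cauchy product; the index set is finite since 'n is finite.\<close>
definition mps_mult :: "('n::finite, 'k::field) mps \<Rightarrow> ('n, 'k) mps \<Rightarrow> ('n, 'k) mps" where
  "mps_mult f g = (\<lambda>I. \<Sum>p\<in>{p. expo_add (fst p) (snd p) = I}. f (fst p) * g (snd p))"

definition monom_t :: "'n expo \<Rightarrow> ('n, 'k::field) mps" where
  "monom_t I = (\<lambda>J. if J = I then 1 else 0)"

definition supp :: "('n, 'k::field) mps \<Rightarrow> 'n expo set" where
  "supp f = {I. f I \<noteq> 0}"

subsection \<open>Fraction field K((t)) = Frac K[[t]] as equivalence classes of pairs\<close>

definition frac_class :: "('n::finite, 'k::field) mps \<Rightarrow> ('n, 'k) mps \<Rightarrow> (('n, 'k) mps \<times> ('n, 'k) mps) set" where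
  "frac_class f g = {(f', g'). g' \<noteq> mps_zero \<and> mps_mult f g' = mps_mult f' g}"

definition laurent_field :: "(('n::finite, 'k::field) mps \<times> ('n, 'k) mps) set set" where
  "laurent_field = {frac_class f g | f g. g \<noteq> mps_zero}"

definition frac_rep :: "(('n, 'k) mps \<times> ('n, 'k) mps) set \<Rightarrow> ('n, 'k) mps \<times> ('n, 'k) mps" where
  "frac_rep X = (SOME p. p \<in> X)"

definition frac_add :: "(('n::finite, 'k::field) mps \<times> ('n, 'k) mps) set \<Rightarrow> (('n, 'k) mps \<times> ('n, 'k) mps) set \<Rightarrow> (('n, 'k) mps \<times> ('n, 'k) mps) set" where
  "frac_add X Y = (case (frac_rep X, frac_rep Y) of ((f, g), (f', g')) \<Rightarrow>
      frac_class (mps_add (mps_mult f g') (mps_mult f' g)) (mps_mult g g'))"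

definition frac_mult :: "(('n::finite, 'k::field) mps \<times> ('n, 'k) mps) set \<Rightarrow> (('n, 'k) mps \<times> ('n, 'k) mps) set \<Rightarrow> (('n, 'k) mps \<times> ('n, 'k) mps) set" where
  "frac_mult X Y = (case (frac_rep X, frac_rep Y) of ((f, g), (f', g')) \<Rightarrow>
      frac_class (mps_mult f f') (mps_mult g g'))"

definition frac_zero :: "(('n::finite, 'k::field) mps \<times> ('n, 'k) mps) set" where
  "frac_zero = frac_class mps_zero (monom_t expo_zero)"

definition frac_one :: "(('n::finite, 'k::field) mps \<times> ('n, 'k) mps) set" where
  "frac_one = frac_class (monom_t expo_zero) (monom_t expo_zero)"

definition expo_emb :: "'n::finite expo \<Rightarrow> real ^ 'n" where
  "expo_emb I = (\<chi> i. real (I i))"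

definition newton_polyhedron :: "'n::finite expo set \<Rightarrow> (real ^ 'n) set" where
  "newton_polyhedron S =
     {x + y | x y. x \<in> convex hull (expo_emb ` S) \<and> (\<forall>i. 0 \<le> y $ i)}"

definition newton_vertices :: "'n::finite expo set \<Rightarrow> 'n expo set" where
  "newton_vertices S = {I. expo_emb I extreme_point_of newton_polyhedron S}"

definition vb_plus :: "'n::finite expo set \<Rightarrow> 'n expo set \<Rightarrow> 'n expo set" where
  "vb_plus a b = newton_vertices (a \<union> b)"

definition vb_times :: "'n::finite expo set \<Rightarrow> 'n expo set \<Rightarrow> 'n expo set" where
  "vb_times a b = newton_vertices {expo_add A B | A B. A \<in> a \<and> B \<in> b}"

definition vb_one :: "'n expo set" where
  "vb_one = {expo_zero}"

text \<open>Order on the fraction semifield VB(t): a/b <= c/d iff a.d + b.c = b.c.\<close>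
definition vb_frac_le :: "'n::finite expo set \<times> 'n expo set \<Rightarrow> 'n expo set \<times> 'n expo set \<Rightarrow> bool" where
  "vb_frac_le p q = (case (p, q) of ((a, b), (c, d)) \<Rightarrow>
      vb_plus (vb_times a d) (vb_times b c) = vb_times b c)"

definition trop :: "('n::finite, 'k::field) mps \<Rightarrow> 'n expo set" where
  "trop f = newton_vertices (supp f)"

text \<open>trop(f/g) = trop f / trop g; the ring K((t))^o = {q. trop q <= 1}.\<close>
definition laurent_circ :: "(('n::finite, 'k::field) mps \<times> ('n, 'k) mps) set set" where
  "laurent_circ = {X \<in> laurent_field.
      \<exists>(f, g) \<in> X. vb_frac_le (trop f, trop g) (vb_one, vb_one)}"

definition laurent_circ_ring :: "(('n::finite, 'k::field) mps \<times> ('n, 'k) mps) set ring" where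
  "laurent_circ_ring = \<lparr>carrier = laurent_circ, monoid.mult = frac_mult, one = frac_one,
      zero = frac_zero, add = frac_add\<rparr>"

definition mord :: "(('n::finite, 'k::field) mps \<times> ('n, 'k) mps) set set \<Rightarrow> 'n expo \<Rightarrow> 'n expo \<Rightarrow> bool" where
  "mord M I J \<longleftrightarrow> frac_class (monom_t I) (mps_add (monom_t I) (monom_t J)) \<notin> M"

end

theory Submission
  imports Defs
begin
definition DD :: "'n expo \<Rightarrow> ('n expo \<times> 'n expo) set" where
  "DD I = {p. expo_add (fst p) (snd p) = I}"

lemma finite_le_expo: "finite {A::('n::finite) expo. \<forall>i. A i \<le> I i}"
proof -
  have "{A::'n expo. \<forall>i. A i \<le> I i} = Pi\<^sub>E UNIV (\<lambda>i. {..I i})"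
    by (auto simp: PiE_UNIV_domain Pi_def)
  then show ?thesis by (simp add: finite_PiE)
qed

lemma finite_DD: "finite (DD (I::('n::finite) expo))"
proof -
  have "DD I \<subseteq> {A. \<forall>i. A i \<le> I i} \<times> {A. \<forall>i. A i \<le> I i}"
    by (auto simp: DD_def expo_add_def)
  then show ?thesis by (rule finite_subset) (intro finite_cartesian_product finite_le_expo)
qed

lemma mps_mult_DD: "mps_mult f g I = (\<Sum>p\<in>DD I. f (fst p) * g (snd p))"
  by (simp add: mps_mult_def DD_def)

lemma mps_mult_comm: "mps_mult f g = mps_mult g (f::('n::finite,'k::field) mps)"
proof
  fix I
  show "mps_mult f g I = mps_mult g f I"
    unfolding mps_mult_DD
    by (rule sum.reindex_bij_witness[where i=prod.swap and j=prod.swap])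
       (auto simp: DD_def expo_add_def fun_eq_iff add.commute)
qed

lemma mps_mult_assoc:
  "mps_mult (mps_mult f g) h = mps_mult f (mps_mult g (h::('n::finite,'k::field) mps))"
proof
  fix I
  have L: "mps_mult (mps_mult f g) h I =
     (\<Sum>x\<in>Sigma (DD I) (\<lambda>p. DD (fst p)). f (fst (snd x)) * g (snd (snd x)) * h (snd (fst x)))"
    unfolding mps_mult_DD sum_distrib_right
    by (subst sum.Sigma) (auto simp: finite_DD split_beta)
  have R: "mps_mult f (mps_mult g h) I =
     (\<Sum>x\<in>Sigma (DD I) (\<lambda>p. DD (snd p)). f (fst (fst x)) * g (fst (snd x)) * h (snd (snd x)))"
    unfolding mps_mult_DD sum_distrib_left
    by (subst sum.Sigma) (auto simp: finite_DD split_beta mult.assoc)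
  show "mps_mult (mps_mult f g) h I = mps_mult f (mps_mult g h) I"
    unfolding L R
    apply (rule sum.reindex_bij_witness[where
          i="\<lambda>((A,Q),(B,C)). ((expo_add A B, C), (A, B))"
      and j="\<lambda>((P,C),(A,B)). ((A, expo_add B C), (B, C))"])
    by (auto simp: DD_def expo_add_def fun_eq_iff add.assoc) (metis add.assoc)+
qed

lemma mps_mult_add_right:
  "mps_mult f (mps_add g h) = mps_add (mps_mult f g) (mps_mult f (h::('n::finite,'k::field) mps))"
  by (rule ext) (simp add: mps_mult_DD mps_add_def distrib_left sum.distrib)

lemma mps_mult_monom:
  "mps_mult (monom_t E) f v = (if \<forall>i. E i \<le> v i then f (\<lambda>i. v i - E i) else (0::'k::field))"
proof -
  have "mps_mult (monom_t E) f v = (\<Sum>p\<in>DD v. if p = (E, \<lambda>i. v i - E i) then f (snd p) else 0)"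
    unfolding mps_mult_DD
    by (rule sum.cong) (auto simp: monom_t_def DD_def expo_add_def fun_eq_iff, metis add_diff_cancel_left')
  also have "\<dots> = (if \<forall>i. E i \<le> v i then f (\<lambda>i. v i - E i) else 0)"
  proof (cases "\<forall>i. E i \<le> v i")
    case True
    then have "(E, \<lambda>i. v i - E i) \<in> DD v" by (auto simp: DD_def expo_add_def fun_eq_iff)
    then show ?thesis using True by (simp add: sum.delta' finite_DD)
  next
    case False
    then have "(E, \<lambda>i. v i - E i) \<notin> DD v" by (auto simp: DD_def expo_add_def fun_eq_iff) (metis le_add1)
    then show ?thesis using False by (simp add: sum.delta' finite_DD del: not_all)
  qed
  finally show ?thesis .
qed

lemma mps_mult_one: "mps_mult (monom_t expo_zero) f = (f::('n::finite,'k::field) mps)"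
  by (rule ext) (simp add: mps_mult_monom expo_zero_def)

typedef ('n, 'k) ps = "UNIV :: ('n expo \<Rightarrow> 'k) set" by simp

lemmas Abs_ps_inv [simp] = Abs_ps_inverse[OF UNIV_I]
declare Rep_ps_inverse [simp]

instantiation ps :: (finite, field) comm_ring_1
begin
definition "0 = Abs_ps mps_zero"
definition "1 = Abs_ps (monom_t expo_zero)"
definition "a + b = Abs_ps (mps_add (Rep_ps a) (Rep_ps b))"
definition "- a = Abs_ps (\<lambda>I. - Rep_ps a I)"
definition "a - b = Abs_ps (\<lambda>I. Rep_ps a I - Rep_ps b I)"
definition "a * b = Abs_ps (mps_mult (Rep_ps a) (Rep_ps b))"
instance
proof
  fix a b c :: "('a, 'b) ps"
  show "a * b * c = a * (b * c)" by (simp add: times_ps_def mps_mult_assoc)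
  show "a * b = b * a" by (simp add: times_ps_def mps_mult_comm)
  show "1 * a = a" by (simp add: times_ps_def one_ps_def mps_mult_one)
  show "a + b + c = a + (b + c)" by (simp add: plus_ps_def mps_add_def add.assoc)
  show "a + b = b + a" by (simp add: plus_ps_def mps_add_def add.commute)
  show "0 + a = a" by (simp add: plus_ps_def zero_ps_def mps_add_def mps_zero_def)
  show "- a + a = 0" by (simp add: plus_ps_def zero_ps_def mps_add_def mps_zero_def uminus_ps_def)
  show "a - b = a + - b" by (simp add: plus_ps_def minus_ps_def mps_add_def uminus_ps_def)
  show "(a + b) * c = a * c + b * c"
    by (simp add: plus_ps_def times_ps_def mps_mult_comm[of _ "Rep_ps c"] mps_mult_add_right)
  show "(0::('a,'b) ps) \<noteq> 1"
  proof
    assume "(0::('a,'b) ps) = 1"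
    then have "mps_zero = (monom_t expo_zero :: ('a,'b) mps)"
      by (metis Abs_ps_inv one_ps_def zero_ps_def)
    then show False by (metis monom_t_def mps_zero_def zero_neq_one)
  qed
qed
end

fun lpos :: "(real^'n) list \<Rightarrow> real^'n \<Rightarrow> bool" where
  "lpos [] d = False"
| "lpos (w#ws) d = (0 < inner w d \<or> (inner w d = 0 \<and> lpos ws d))"

definition lnn :: "(real^'n) list \<Rightarrow> real^'n \<Rightarrow> bool" where
  "lnn ws d = (lpos ws d \<or> (\<forall>w\<in>set ws. inner w d = 0))"

lemma lnn_Nil [simp]: "lnn [] d"
  by (simp add: lnn_def)

lemma lnn_Cons: "lnn (w#ws) d = (0 < inner w d \<or> (inner w d = 0 \<and> lnn ws d))"
  by (auto simp: lnn_def)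

lemma lpos_add: "lpos ws d \<Longrightarrow> lnn ws e \<Longrightarrow> lpos ws (d + e)"
  by (induction ws) (auto simp: lnn_Cons inner_add_right)

lemma lnn_add: "lnn ws d \<Longrightarrow> lnn ws e \<Longrightarrow> lnn ws (d + e)"
  by (induction ws) (auto simp: lnn_Cons inner_add_right)

lemma lpos_imp_lnn: "lpos ws d \<Longrightarrow> lnn ws d"
  by (simp add: lnn_def)

lemma lpos_scale: "0 < c \<Longrightarrow> lpos ws d \<Longrightarrow> lpos ws (c *\<^sub>R d)"
  by (induction ws) auto

lemma lnn_scale: "0 \<le> c \<Longrightarrow> lnn ws d \<Longrightarrow> lnn ws (c *\<^sub>R d)"
  unfolding lnn_def using lpos_scale[of c ws d] by (cases "c = 0") auto

lemma lpos_not_lnn_neg: "lpos ws d \<Longrightarrow> \<not> lnn ws (- d)"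
  by (induction ws) (auto simp: lnn_Cons)

lemma lnn_both: "lnn ws d \<Longrightarrow> lnn ws (- d) \<Longrightarrow> \<forall>w\<in>set ws. inner w d = 0"
  by (induction ws) (auto simp: lnn_Cons)

lemma lnn_total: "lnn ws d \<or> lpos ws (- d)"
  by (induction ws) (auto simp: lnn_Cons)

lemma lnn_nonneg:
  "(\<forall>w\<in>set ws. \<forall>i. 0 \<le> w$i) \<Longrightarrow> (\<forall>i. 0 \<le> d$i) \<Longrightarrow> lnn ws d"
proof (induction ws)
  case Nil then show ?case by simp
next
  case (Cons w ws)
  have "0 \<le> inner w d" using Cons.prems by (auto simp: inner_vec_def intro!: sum_nonneg)
  then show ?case using Cons by (auto simp: lnn_Cons)
qed

lemma lnn_first: "lnn (w#ws) d \<Longrightarrow> 0 \<le> inner w d"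
  by (auto simp: lnn_Cons)

definition uvs :: "(real^'n::finite) list" where
  "uvs = (SOME xs. set xs = range (\<lambda>i. axis i 1))"

lemma set_uvs: "set (uvs :: (real^'n::finite) list) = range (\<lambda>i. axis i 1)"
proof -
  have "\<exists>xs. set xs = range (\<lambda>i::'n. axis i (1::real))" by (rule finite_list) simp
  then show ?thesis unfolding uvs_def by (rule someI_ex)
qed

definition good_ws :: "(real^'n::finite) list \<Rightarrow> bool" where
  "good_ws ws = ((\<forall>w\<in>set ws. \<forall>i. 0 \<le> w$i) \<and> set uvs \<subseteq> set ws)"

lemma good_ws_a: "(\<forall>i. 0 \<le> a$i) \<Longrightarrow> good_ws (a # uvs)"
  by (auto simp: good_ws_def set_uvs axis_def)

lemma good_ws_uvs: "good_ws uvs"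
  by (auto simp: good_ws_def set_uvs axis_def)

lemma good_zero: "good_ws ws \<Longrightarrow> \<forall>w\<in>set ws. inner w d = 0 \<Longrightarrow> d = 0"
proof -
  assume g: "good_ws ws" and z: "\<forall>w\<in>set ws. inner w d = 0"
  have "d $ i = 0" for i
  proof -
    have "axis i 1 \<in> set ws" using g by (auto simp: good_ws_def set_uvs)
    then have "inner (axis i 1) d = 0" using z by blast
    then show ?thesis by (simp add: inner_axis')
  qed
  then show "d = 0" by (simp add: vec_eq_iff)
qed

lemma good_antisym: "good_ws ws \<Longrightarrow> lnn ws d \<Longrightarrow> lnn ws (- d) \<Longrightarrow> d = 0"
  using good_zero lnn_both by blast

lemma good_lpos_or: "good_ws ws \<Longrightarrow> d \<noteq> 0 \<Longrightarrow> lpos ws d \<or> lpos ws (- d)"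
  using lnn_total[of ws d] good_zero[of ws d] by (auto simp: lnn_def)

lemma emb_add: "expo_emb (expo_add A B) = expo_emb A + expo_emb B"
  by (simp add: expo_emb_def expo_add_def vec_eq_iff)

lemma emb_inj: "expo_emb A = expo_emb B \<longleftrightarrow> A = B"
  by (auto simp: expo_emb_def vec_eq_iff fun_eq_iff)

lemma emb_nonneg: "0 \<le> expo_emb A $ i"
  by (simp add: expo_emb_def)

lemma emb_zero: "expo_emb expo_zero = 0"
  by (simp add: expo_emb_def expo_zero_def vec_eq_iff)

subsection \<open>Minimum of a nonnegative weight over a set of lattice points\<close>

lemma wmin:
  fixes S :: "('n::finite) expo set" and w :: "real^'n"
  assumes w: "\<forall>i. 0 \<le> w$i" and ne: "S \<noteq> {}"
  shows "\<exists>v\<in>S. \<forall>s\<in>S. inner w (expo_emb v) \<le> inner w (expo_emb s)"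
proof -
  obtain s0 where s0: "s0 \<in> S" using ne by blast
  define c where "c = inner w (expo_emb s0)"
  define T where "T = {s\<in>S. inner w (expo_emb s) \<le> c}"
  define tr where "tr = (\<lambda>s::'n expo. \<lambda>i. if 0 < w$i then s i else 0)"
  define N where "N = (\<Sum>i\<in>UNIV. nat \<lceil>c / w$i\<rceil>)"
  have ie: "inner w (expo_emb s) = (\<Sum>i\<in>UNIV. w$i * real (s i))" for s
    by (simp add: inner_vec_def expo_emb_def)
  have tr_eq: "inner w (expo_emb (tr s)) = inner w (expo_emb s)" for s
    unfolding ie tr_def
  proof (rule sum.cong)
    fix i
    have "w$i = 0" if "\<not> 0 < w$i" using w[rule_format, of i] that by linarith
    then show "w $ i * real (if 0 < w $ i then s i else 0) = w $ i * real (s i)" by auto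
  qed simp
  have bound: "tr s i \<le> N" if "s \<in> T" for s i
  proof (cases "0 < w$i")
    case True
    have "w$i * real (s i) \<le> (\<Sum>j\<in>UNIV. w$j * real (s j))"
      by (rule member_le_sum) (use w in auto)
    also have "\<dots> \<le> c" using that by (simp add: T_def ie)
    finally have "real (s i) \<le> c / w$i" using True by (simp add: field_simps)
    then have "s i \<le> nat \<lceil>c / w$i\<rceil>" by linarith
    also have "\<dots> \<le> N" unfolding N_def by (rule member_le_sum) auto
    finally show ?thesis using True by (simp add: tr_def)
  next
    case False then show ?thesis by (simp add: tr_def)
  qed
  have "tr ` T \<subseteq> {A. \<forall>i. A i \<le> (\<lambda>_. N) i}"
  proof (rule image_subsetI)
    fix s assume "s \<in> T" then show "tr s \<in> {A. \<forall>i. A i \<le> (\<lambda>_. N) i}" using bound by simp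
  qed
  then have fin: "finite (tr ` T)" by (rule finite_subset) (rule finite_le_expo)
  have "(\<lambda>s. inner w (expo_emb s)) ` T = (\<lambda>s. inner w (expo_emb s)) ` tr ` T"
    unfolding image_image tr_eq ..
  then have finv: "finite ((\<lambda>s. inner w (expo_emb s)) ` T)" using fin by simp
  have s0T: "s0 \<in> T" using s0 by (simp add: T_def c_def)
  define m where "m = Min ((\<lambda>s. inner w (expo_emb s)) ` T)"
  have "m \<in> (\<lambda>s. inner w (expo_emb s)) ` T" unfolding m_def
    using finv s0T by (intro Min_in) auto
  then obtain v where vT: "v \<in> T" and vm: "inner w (expo_emb v) = m" by auto
  have "inner w (expo_emb v) \<le> inner w (expo_emb s)" if "s \<in> S" for s
  proof (cases "s \<in> T")
    case True then show ?thesis unfolding vm m_def using finv by (intro Min_le) auto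
  next
    case False
    then have "c < inner w (expo_emb s)" using that by (auto simp: T_def)
    moreover have "inner w (expo_emb v) \<le> c" using vT by (simp add: T_def)
    ultimately show ?thesis by simp
  qed
  then show ?thesis using vT by (auto simp: T_def)
qed

lemma lex_min:
  fixes S :: "('n::finite) expo set"
  assumes "\<forall>w\<in>set ws. \<forall>i. 0 \<le> w$i" and "S \<noteq> {}"
  shows "\<exists>v\<in>S. \<forall>s\<in>S. lnn ws (expo_emb s - expo_emb v)"
  using assms
proof (induction ws arbitrary: S)
  case Nil then show ?case by auto
next
  case (Cons w ws)
  obtain v0 where v0: "v0 \<in> S" "\<forall>s\<in>S. inner w (expo_emb v0) \<le> inner w (expo_emb s)"
    using wmin[of w S] Cons.prems by auto
  define S' where "S' = {s\<in>S. inner w (expo_emb s) = inner w (expo_emb v0)}"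
  have "S' \<noteq> {}" using v0 by (auto simp: S'_def)
  then obtain v where v: "v \<in> S'" "\<forall>s\<in>S'. lnn ws (expo_emb s - expo_emb v)"
    using Cons.IH[of S'] Cons.prems by auto
  have vv: "inner w (expo_emb v) = inner w (expo_emb v0)" using v(1) by (simp add: S'_def)
  have "lnn (w#ws) (expo_emb s - expo_emb v)" if "s \<in> S" for s
  proof (cases "s \<in> S'")
    case True
    then have "inner w (expo_emb s) = inner w (expo_emb v0)" by (simp add: S'_def)
    then have "inner w (expo_emb s - expo_emb v) = 0" using vv by (simp add: inner_diff_right)
    then show ?thesis using v(2) True by (simp add: lnn_Cons)
  next
    case False
    then have "inner w (expo_emb s) \<noteq> inner w (expo_emb v0)" using that by (simp add: S'_def)
    moreover have "inner w (expo_emb v0) \<le> inner w (expo_emb s)" using that v0(2) by blast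
    ultimately have "inner w (expo_emb v0) < inner w (expo_emb s)" by linarith
    then have "0 < inner w (expo_emb s - expo_emb v)" using vv by (simp add: inner_diff_right)
    then show ?thesis by (simp add: lnn_Cons)
  qed
  then show ?case using v(1) unfolding S'_def by blast
qed

abbreviation NP where "NP \<equiv> newton_polyhedron"

lemma NP_upward: "x \<in> NP S \<Longrightarrow> (\<forall>i. 0 \<le> y$i) \<Longrightarrow> x + y \<in> NP S"
proof -
  assume x: "x \<in> NP S" and y: "\<forall>i. 0 \<le> y$i"
  then obtain c z where "x = c + z" "c \<in> convex hull (expo_emb ` S)" "\<forall>i. 0 \<le> z$i"
    by (auto simp: newton_polyhedron_def)
  then show "x + y \<in> NP S" unfolding newton_polyhedron_def
    using y by (intro CollectI exI[of _ c] exI[of _ "z + y"]) (auto simp: add.assoc)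
qed

lemma emb_in_NP: "s \<in> S \<Longrightarrow> expo_emb s \<in> NP S"
  unfolding newton_polyhedron_def
  by (intro CollectI exI[of _ "expo_emb s"] exI[of _ "0::real^'a"]) (auto intro: hull_inc)

lemma NP_lnn:
  assumes w: "\<forall>w\<in>set ws. \<forall>i. 0 \<le> w$i" and S: "\<forall>s\<in>S. lnn ws (expo_emb s - p)"
    and x: "x \<in> NP S"
  shows "lnn ws (x - p)"
proof -
  define Q where "Q = {x. lnn ws (x - p)}"
  have cQ: "convex Q" unfolding convex_def Q_def
  proof (intro ballI allI impI, simp)
    fix x y :: "real^'a" and u v :: real
    assume "lnn ws (x - p)" "lnn ws (y - p)" "0 \<le> u" "0 \<le> v" "u + v = 1"
    moreover have "u *\<^sub>R x + v *\<^sub>R y - p = u *\<^sub>R (x - p) + v *\<^sub>R (y - p)"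
      using \<open>u + v = 1\<close> by (simp add: algebra_simps flip: scaleR_add_left)
    ultimately show "lnn ws (u *\<^sub>R x + v *\<^sub>R y - p)"
      by (simp add: lnn_add lnn_scale)
  qed
  have "expo_emb ` S \<subseteq> Q" using S by (auto simp: Q_def)
  then have hQ: "convex hull (expo_emb ` S) \<subseteq> Q" using cQ by (rule hull_minimal)
  obtain c z where "x = c + z" "c \<in> convex hull (expo_emb ` S)" "\<forall>i. 0 \<le> z$i"
    using x by (auto simp: newton_polyhedron_def)
  moreover have "lnn ws (c - p)" using hQ \<open>c \<in> _\<close> by (auto simp: Q_def)
  moreover have "lnn ws z" using w \<open>\<forall>i. 0 \<le> z$i\<close> by (rule lnn_nonneg)
  ultimately show ?thesis using lnn_add[of ws "c - p" z] by (simp add: algebra_simps)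
qed

lemma lex_vertex:
  assumes g: "good_ws ws" and v: "v \<in> S" and min: "\<forall>s\<in>S. lnn ws (expo_emb s - expo_emb v)"
  shows "v \<in> newton_vertices S"
proof -
  have w: "\<forall>w\<in>set ws. \<forall>i. 0 \<le> w$i" using g by (simp add: good_ws_def)
  let ?e = "expo_emb v"
  have "?e \<notin> open_segment p q" if p: "p \<in> NP S" and q: "q \<in> NP S" for p q
  proof
    assume "?e \<in> open_segment p q"
    then obtain u where pq: "p \<noteq> q" and u: "0 < u" "u < 1" and e: "?e = (1 - u) *\<^sub>R p + u *\<^sub>R q"
      unfolding in_segment(2) by blast
    have dp: "lnn ws (p - ?e)" using NP_lnn[OF w min p] .
    have dq: "lnn ws (q - ?e)" using NP_lnn[OF w min q] .
    have "p - ?e = u *\<^sub>R (p - q)" using e by (simp add: algebra_simps)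
    then have "lnn ws ((1/u) *\<^sub>R (p - ?e))" using dp u by (intro lnn_scale) auto
    then have a1: "lnn ws (p - q)" using \<open>p - ?e = _\<close> u by simp
    have "q - ?e = (1 - u) *\<^sub>R (- (p - q))" using e by (simp add: algebra_simps)
    then have "lnn ws ((1/(1-u)) *\<^sub>R (q - ?e))" using dq u by (intro lnn_scale) auto
    then have a2: "lnn ws (- (p - q))" using \<open>q - ?e = _\<close> u by simp
    have "p - q = 0" using good_antisym[OF g a1 a2] .
    then show False using pq by simp
  qed
  moreover have "?e \<in> NP S" using v by (rule emb_in_NP)
  ultimately have "?e extreme_point_of NP S" unfolding extreme_point_of_def by blast
  then show ?thesis by (simp add: newton_vertices_def)
qed

lemma convex_NP: "convex (NP S)"
proof -
  have "convex {y::real^'a. \<forall>i. 0 \<le> y$i}"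
    unfolding convex_def by (auto intro!: add_nonneg_nonneg)
  then have "convex (\<Union>x\<in>convex hull (expo_emb ` S). \<Union>y\<in>{y::real^'a. \<forall>i. 0 \<le> y$i}. {x + y})"
    by (intro convex_sums convex_convex_hull)
  moreover have "NP S = (\<Union>x\<in>convex hull (expo_emb ` S). \<Union>y\<in>{y. \<forall>i. 0 \<le> y$i}. {x + y})"
    unfolding newton_polyhedron_def by blast
  ultimately show ?thesis by simp
qed

lemma NP_subset: "expo_emb ` A \<subseteq> NP B \<Longrightarrow> NP A \<subseteq> NP B"
proof
  fix x assume A: "expo_emb ` A \<subseteq> NP B" and x: "x \<in> NP A"
  have "convex hull (expo_emb ` A) \<subseteq> NP B" using A convex_NP by (rule hull_minimal)
  moreover obtain c z where "x = c + z" "c \<in> convex hull (expo_emb ` A)" "\<forall>i. 0 \<le> z$i"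
    using x by (auto simp: newton_polyhedron_def)
  ultimately have "c \<in> NP B" "\<forall>i. 0 \<le> z$i" "x = c + z" by auto
  then show "x \<in> NP B" using NP_upward by simp
qed

lemma NP_mono: "A \<subseteq> B \<Longrightarrow> NP A \<subseteq> NP B"
proof (rule NP_subset, rule image_subsetI)
  fix a assume "A \<subseteq> B" "a \<in> A"
  then have "a \<in> B" by blast
  then show "expo_emb a \<in> NP B" by (rule emb_in_NP)
qed

lemma vertices_union:
  assumes "expo_emb ` A \<subseteq> NP B"
  shows "newton_vertices (A \<union> B) = newton_vertices B"
proof -
  have "expo_emb ` (A \<union> B) \<subseteq> NP B"
  proof (rule image_subsetI)
    fix a assume "a \<in> A \<union> B"
    then show "expo_emb a \<in> NP B"
    proof
      assume "a \<in> A" then show ?thesis using assms by blast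
    next
      assume "a \<in> B" then show ?thesis by (rule emb_in_NP)
    qed
  qed
  then have "NP (A \<union> B) \<subseteq> NP B" by (rule NP_subset)
  moreover have "NP B \<subseteq> NP (A \<union> B)" by (rule NP_mono) blast
  ultimately have "NP (A \<union> B) = NP B" by (rule equalityI)
  then show ?thesis by (simp add: newton_vertices_def)
qed

lemma dickson_aux:
  fixes D :: "'n set"
  assumes "finite D"
  shows "\<forall>S::('n expo) set. \<exists>F. finite F \<and> F \<subseteq> S \<and> (\<forall>s\<in>S. \<exists>f\<in>F. \<forall>i\<in>D. f i \<le> s i)"
  using assms
proof (induction D)
  case empty
  show ?case
  proof
    fix S :: "'n expo set"
    show "\<exists>F. finite F \<and> F \<subseteq> S \<and> (\<forall>s\<in>S. \<exists>f\<in>F. \<forall>i\<in>{}. f i \<le> s i)"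
    proof (cases "S = {}")
      case True then show ?thesis by (intro exI[of _ "{}"]) simp
    next
      case False then obtain s0 where "s0 \<in> S" by blast
      then show ?thesis by (intro exI[of _ "{s0}"]) simp
    qed
  qed
next
  case (insert d D)
  show ?case
  proof
    fix S :: "'n expo set"
    obtain F0 where F0: "finite F0" "F0 \<subseteq> S" "\<forall>s\<in>S. \<exists>f\<in>F0. \<forall>i\<in>D. f i \<le> s i"
      using spec[OF insert.IH, of S] by (elim exE conjE) blast
    define N where "N = (\<Sum>f\<in>F0. f d)"
    have "\<forall>k. \<exists>G. finite G \<and> G \<subseteq> {s\<in>S. s d = k} \<and> (\<forall>s\<in>{s\<in>S. s d = k}. \<exists>f\<in>G. \<forall>i\<in>D. f i \<le> s i)"
      by (intro allI spec[OF insert.IH])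
    from choice[OF this] obtain G where G: "\<forall>k. finite (G k) \<and> G k \<subseteq> {s\<in>S. s d = k} \<and>
      (\<forall>s\<in>{s\<in>S. s d = k}. \<exists>f\<in>G k. \<forall>i\<in>D. f i \<le> s i)" by blast
    define F where "F = F0 \<union> (\<Union>k<N. G k)"
    have "finite F" using F0(1) G by (simp add: F_def)
    moreover have "F \<subseteq> S" using F0(2) G unfolding F_def by blast
    moreover have "\<exists>f\<in>F. \<forall>i\<in>insert d D. f i \<le> s i" if s: "s \<in> S" for s
    proof (cases "N \<le> s d")
      case True
      obtain f where f: "f \<in> F0" "\<forall>i\<in>D. f i \<le> s i" using F0(3) s by blast
      have "f d \<le> N" unfolding N_def using f(1) F0(1) by (intro member_le_sum) auto
      then have "\<forall>i\<in>insert d D. f i \<le> s i" using f(2) True by auto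
      moreover have "f \<in> F" using f(1) by (simp add: F_def)
      ultimately show ?thesis by blast
    next
      case False
      then have "s \<in> {s'\<in>S. s' d = s d}" using s by simp
      then obtain f where f: "f \<in> G (s d)" "\<forall>i\<in>D. f i \<le> s i" using G by blast
      have "f d = s d" using G f(1) by blast
      then have "\<forall>i\<in>insert d D. f i \<le> s i" using f(2) by auto
      moreover have "f \<in> F" using f(1) False unfolding F_def by auto
      ultimately show ?thesis by blast
    qed
    ultimately show "\<exists>F. finite F \<and> F \<subseteq> S \<and> (\<forall>s\<in>S. \<exists>f\<in>F. \<forall>i\<in>insert d D. f i \<le> s i)"
      by blast
  qed
qed

lemma dickson:
  fixes S :: "('n::finite) expo set"
  shows "\<exists>F. finite F \<and> F \<subseteq> S \<and> (\<forall>s\<in>S. \<exists>f\<in>F. \<forall>i. f i \<le> s i)"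
  using spec[OF dickson_aux[OF finite_class.finite_UNIV], of S] by simp

lemma closed_NP: "closed (NP (S::('n::finite) expo set))"
proof -
  obtain F where F: "finite F" "F \<subseteq> S" "\<forall>s\<in>S. \<exists>f\<in>F. \<forall>i. f i \<le> s i"
    using dickson[of S] by blast
  have "expo_emb ` S \<subseteq> NP F"
  proof
    fix x assume "x \<in> expo_emb ` S"
    then obtain s where s: "s \<in> S" "x = expo_emb s" by blast
    then obtain f where f: "f \<in> F" "\<forall>i. f i \<le> s i" using F(3) by blast
    have e1: "expo_emb f \<in> NP F" using f(1) by (rule emb_in_NP)
    have e2: "\<forall>i. 0 \<le> (expo_emb s - expo_emb f) $ i" using f(2) by (simp add: expo_emb_def)
    have "expo_emb f + (expo_emb s - expo_emb f) \<in> NP F" using NP_upward[OF e1 e2] .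
    then show "x \<in> NP F" using s(2) by simp
  qed
  then have "NP S \<subseteq> NP F" by (rule NP_subset)
  then have eq1: "NP S = NP F" using NP_mono[OF F(2)] by (rule equalityI)
  have eq2: "NP F = (\<Union>x\<in>convex hull (expo_emb ` F). \<Union>y\<in>{y. \<forall>i. 0 \<le> y$i}. {x + y})"
    unfolding newton_polyhedron_def by blast
  have "closed (\<Union>x\<in>convex hull (expo_emb ` F). \<Union>y\<in>{y::real^'n. \<forall>i. 0 \<le> y$i}. {x + y})"
  proof (rule compact_closed_sums)
    show "compact (convex hull (expo_emb ` F))"
      using F(1) by (intro compact_convex_hull finite_imp_compact finite_imageI)
    show "closed {y::real^'n. \<forall>i. 0 \<le> y$i}"
      by (intro closed_Collect_all) (simp add: closed_halfspace_component_ge_cart)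
  qed
  then show ?thesis unfolding eq1 eq2 .
qed

lemma sep:
  fixes S :: "('n::finite) expo set"
  assumes z: "z \<notin> NP S"
  shows "\<exists>a. (\<forall>i. 0 \<le> a$i) \<and> (\<forall>x\<in>NP S. inner a z < inner a x)"
proof (cases "NP S = {}")
  case True
  have "\<forall>x\<in>NP S. inner (0::real^'n) z < inner 0 x" unfolding True by (rule ballI) (erule emptyE)
  moreover have "\<forall>i. 0 \<le> (0::real^'n)$i" by simp
  ultimately show ?thesis by (intro exI[of _ "0::real^'n"] conjI)
next
  case False
  then obtain x0 where x0: "x0 \<in> NP S" by blast
  obtain a b where ab: "inner a z < b" "\<forall>x\<in>NP S. b < inner a x"
    using separating_hyperplane_closed_point[OF convex_NP closed_NP z] by blast
  have "0 \<le> a$i" for i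
  proof (rule ccontr)
    assume "\<not> 0 \<le> a$i"
    then have neg: "a$i < 0" by simp
    define t where "t = (inner a x0 - b) / (- a$i)"
    have "b < inner a x0" using ab x0 by blast
    then have t0: "0 \<le> t" using neg unfolding t_def by (intro divide_nonneg_pos) auto
    have "x0 + t *\<^sub>R axis i 1 \<in> NP S" using x0 t0 by (intro NP_upward) (auto simp: axis_def)
    then have "b < inner a (x0 + t *\<^sub>R axis i 1)" using ab by blast
    moreover have "inner a (x0 + t *\<^sub>R axis i 1) = inner a x0 + t * a$i"
      by (simp add: inner_add_right inner_axis)
    moreover have "t * a$i = b - inner a x0" using neg by (simp add: t_def field_simps)
    ultimately show False by simp
  qed
  moreover have "\<forall>x\<in>NP S. inner a z < inner a x"
  proof
    fix x assume "x \<in> NP S"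
    then have "b < inner a x" using ab(2) by blast
    then show "inner a z < inner a x" using ab(1) by linarith
  qed
  ultimately show ?thesis by blast
qed

lemma vertices_hyp:
  fixes A B :: "('n::finite) expo set"
  assumes h: "newton_vertices (A \<union> B) = newton_vertices B"
  shows "expo_emb ` A \<subseteq> NP B"
proof
  fix z assume "z \<in> expo_emb ` A"
  then obtain a where a: "a \<in> A" "z = expo_emb a" by blast
  show "z \<in> NP B"
  proof (rule ccontr)
    assume "z \<notin> NP B"
    then obtain w where w: "\<forall>i. 0 \<le> w$i" "\<forall>x\<in>NP B. inner w z < inner w x" using sep by blast
    have g: "good_ws (w # uvs)" using w(1) by (rule good_ws_a)
    have wn: "\<forall>w\<in>set (w # uvs). \<forall>i. 0 \<le> w$i" using g by (simp add: good_ws_def)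
    have ne: "A \<union> B \<noteq> {}" using a(1) by blast
    obtain v where v: "v \<in> A \<union> B" "\<forall>s\<in>A \<union> B. lnn (w # uvs) (expo_emb s - expo_emb v)"
      using lex_min[OF wn ne] by blast
    have "v \<in> newton_vertices (A \<union> B)" using lex_vertex[OF g v] .
    then have "v \<in> newton_vertices B" using h by simp
    then have "expo_emb v extreme_point_of NP B" by (simp add: newton_vertices_def)
    then have "expo_emb v \<in> NP B" by (simp add: extreme_point_of_def)
    then have "inner w z < inner w (expo_emb v)" using w(2) by blast
    moreover have "lnn (w # uvs) (expo_emb a - expo_emb v)" using v(2) a(1) by blast
    then have "0 \<le> inner w (expo_emb a - expo_emb v)" by (rule lnn_first)
    ultimately show False using a(2) by (simp add: inner_diff_right)
  qed
qed

abbreviation coef :: "('n::finite, 'k::field) ps \<Rightarrow> 'n expo \<Rightarrow> 'k" where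
  "coef x \<equiv> Rep_ps x"

definition mon :: "'n expo \<Rightarrow> ('n::finite, 'k::field) ps" where
  "mon E = Abs_ps (monom_t E)"

lemma coef_mult: "coef (x * y) = mps_mult (coef x) (coef y)"
  by (simp add: times_ps_def)

lemma coef_add: "coef (x + y) v = coef x v + coef y v"
  by (simp add: plus_ps_def mps_add_def)

lemma coef_diff: "coef (x - y) v = coef x v - coef y v"
  by (simp add: minus_ps_def)

lemma coef_zero: "coef 0 = mps_zero"
  by (simp add: zero_ps_def)

lemma coef_one: "coef 1 = monom_t expo_zero"
  by (simp add: one_ps_def)

lemma coef_mon: "coef (mon E) = monom_t E"
  by (simp add: mon_def)

lemma ps_eq_iff: "x = y \<longleftrightarrow> coef x = coef y"
  by (simp add: Rep_ps_inject)

lemma ps_nonzero_supp: "(x::('n::finite,'k::field) ps) \<noteq> 0 \<longleftrightarrow> supp (coef x) \<noteq> {}"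
  by (auto simp: ps_eq_iff coef_zero supp_def mps_zero_def fun_eq_iff)

lemma coef_mon_mult:
  "coef (mon E * x) v = (if \<forall>i. E i \<le> v i then coef x (\<lambda>i. v i - E i) else 0)"
  by (simp add: coef_mult coef_mon mps_mult_monom)

lemma mon_mult_nz:
  assumes "coef (mon E * x) v \<noteq> 0"
  shows "\<exists>s\<in>supp (coef x). expo_emb v = expo_emb E + expo_emb s"
proof -
  have le: "\<forall>i. E i \<le> v i" and nz: "coef x (\<lambda>i. v i - E i) \<noteq> 0"
    using assms by (auto simp: coef_mon_mult split: if_splits)
  have "expo_emb v = expo_emb E + expo_emb (\<lambda>i. v i - E i)"
    using le by (simp add: expo_emb_def vec_eq_iff of_nat_diff)
  then show ?thesis using nz by (auto simp: supp_def)
qed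

lemma mon_mult_at:
  "coef (mon E * x) (expo_add E s) = coef x s"
proof -
  have "(\<lambda>i. expo_add E s i - E i) = s" by (simp add: expo_add_def)
  then show ?thesis by (simp add: coef_mon_mult expo_add_def)
qed

lemma mon_mult_mon: "mon A * mon B = (mon (expo_add A B) :: ('n::finite,'k::field) ps)"
proof -
  have "coef (mon A * mon B) v = coef (mon (expo_add A B) :: ('n,'k) ps) v" for v
  proof (cases "\<forall>i. A i \<le> v i")
    case True
    have "((\<lambda>i. v i - A i) = B) = (v = expo_add A B)"
      using True by (auto simp: fun_eq_iff expo_add_def) (metis le_add_diff_inverse)
    then show ?thesis using True by (simp add: coef_mon_mult coef_mon monom_t_def)
  next
    case False
    then have "v \<noteq> expo_add A B" by (auto simp: expo_add_def)
    then show ?thesis using False by (simp add: coef_mon_mult coef_mon monom_t_def)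
  qed
  then show ?thesis by (simp add: ps_eq_iff fun_eq_iff)
qed

lemma mon_zero: "mon expo_zero = 1"
  by (simp add: mon_def one_ps_def)

subsection \<open>Leading terms\<close>

lemma lead_mult:
  assumes g: "good_ws ws"
    and vf: "vf \<in> supp f" "\<forall>s\<in>supp f. lnn ws (expo_emb s - expo_emb vf)"
    and vg: "vg \<in> supp g" "\<forall>s\<in>supp g. lnn ws (expo_emb s - expo_emb vg)"
  shows "mps_mult f g (expo_add vf vg) = f vf * (g vg :: 'k::field)"
proof -
  have "mps_mult f g (expo_add vf vg) = (\<Sum>p\<in>DD (expo_add vf vg). if p = (vf, vg) then f vf * g vg else 0)"
    unfolding mps_mult_DD
  proof (rule sum.cong[OF refl])
    fix p assume p: "p \<in> DD (expo_add vf vg)"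
    show "f (fst p) * g (snd p) = (if p = (vf, vg) then f vf * g vg else 0)"
    proof (cases "f (fst p) \<noteq> 0 \<and> g (snd p) \<noteq> 0")
      case True
      then have l1: "lnn ws (expo_emb (fst p) - expo_emb vf)" and l2: "lnn ws (expo_emb (snd p) - expo_emb vg)"
        using vf vg by (auto simp: supp_def)
      have e: "expo_emb (fst p) + expo_emb (snd p) = expo_emb vf + expo_emb vg"
        using p by (simp add: DD_def flip: emb_add)
      then have "expo_emb (snd p) - expo_emb vg = - (expo_emb (fst p) - expo_emb vf)"
        by (simp add: algebra_simps)
      then have "lnn ws (- (expo_emb (fst p) - expo_emb vf))" using l2 by simp
      then have "expo_emb (fst p) - expo_emb vf = 0" using good_antisym[OF g l1] by blast
      then have "fst p = vf" by (simp add: emb_inj)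
      moreover then have "snd p = vg" using e by (simp add: emb_inj)
      ultimately have "p = (vf, vg)" by (simp add: prod_eq_iff)
      then show ?thesis by simp
    next
      case False
      then have "p \<noteq> (vf, vg)" using vf(1) vg(1) by (auto simp: supp_def)
      then show ?thesis using False by auto
    qed
  qed
  also have "\<dots> = f vf * g vg"
  proof -
    have "(vf, vg) \<in> DD (expo_add vf vg)" by (simp add: DD_def)
    then show ?thesis by (simp add: sum.delta' finite_DD)
  qed
  finally show ?thesis .
qed

instance ps :: (finite, field) idom
proof
  fix x y :: "('a,'b) ps"
  assume x: "x \<noteq> 0" and y: "y \<noteq> 0"
  have wn: "\<forall>w\<in>set uvs. \<forall>i. 0 \<le> (w::real^'a)$i" using good_ws_uvs by (simp add: good_ws_def)
  obtain vf where vf: "vf \<in> supp (coef x)" "\<forall>s\<in>supp (coef x). lnn uvs (expo_emb s - expo_emb vf)"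
    using lex_min[OF wn] x by (auto simp: ps_nonzero_supp)
  obtain vg where vg: "vg \<in> supp (coef y)" "\<forall>s\<in>supp (coef y). lnn uvs (expo_emb s - expo_emb vg)"
    using lex_min[OF wn] y by (auto simp: ps_nonzero_supp)
  have "coef (x * y) (expo_add vf vg) = coef x vf * coef y vg"
    unfolding coef_mult by (rule lead_mult[OF good_ws_uvs vf vg])
  also have "\<dots> \<noteq> 0" using vf(1) vg(1) by (simp add: supp_def)
  finally show "x * y \<noteq> 0" by (auto simp: coef_zero mps_zero_def)
qed

lemma core_helper:
  fixes f g :: "('n::finite,'k::field) ps"
  assumes g: "good_ws (a # rest)"
    and IJ: "lpos (a # rest) (expo_emb J - expo_emb I)"
    and vg: "vg \<in> supp (coef g)" "\<forall>s\<in>supp (coef g). lnn (a # rest) (expo_emb s - expo_emb vg)"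
    and fg: "expo_emb ` supp (coef f) \<subseteq> NP (supp (coef g))"
  shows "expo_add (expo_add I I) vg \<in> supp (coef (g * (mon I + mon J) * (mon I + mon J) - mon (expo_add I J) * f))"
    and "\<forall>z\<in>supp (coef (g * (mon I + mon J) * (mon I + mon J))).
           inner a (expo_emb (expo_add (expo_add I I) vg)) \<le> inner a (expo_emb z)"
proof -
  let ?ws = "a # rest"
  define v where "v = expo_add (expo_add I I) vg"
  have ev: "expo_emb v = expo_emb I + expo_emb I + expo_emb vg" by (simp add: v_def emb_add)
  have wn: "\<forall>w\<in>set ?ws. \<forall>i. 0 \<le> w$i" using g by (simp add: good_ws_def)
  have nI: "\<not> lnn ?ws (expo_emb I - expo_emb J)"
    using lpos_not_lnn_neg[OF IJ] by simp
  have uu: "g * (mon I + mon J) * (mon I + mon J) =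
     mon (expo_add I I) * g + mon (expo_add I J) * g + mon (expo_add J I) * g + mon (expo_add J J) * g"
    by (simp add: algebra_simps flip: mon_mult_mon)
  have bad: "coef (mon E * g) v = 0" if E: "E = expo_add I J \<or> E = expo_add J I \<or> E = expo_add J J" for E
  proof (rule ccontr)
    assume "coef (mon E * g) v \<noteq> 0"
    then obtain s where s: "s \<in> supp (coef g)" "expo_emb v = expo_emb E + expo_emb s"
      using mon_mult_nz by blast
    have l: "lnn ?ws (expo_emb s - expo_emb vg)" using vg(2) s(1) by blast
    from E show False
    proof (elim disjE)
      assume "E = expo_add I J"
      then have "expo_emb s - expo_emb vg = expo_emb I - expo_emb J"
        using s(2) ev by (simp add: emb_add algebra_simps)
      then show False using l nI by simp
    next
      assume "E = expo_add J I"
      then have "expo_emb s - expo_emb vg = expo_emb I - expo_emb J"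
        using s(2) ev by (simp add: emb_add algebra_simps)
      then show False using l nI by simp
    next
      assume "E = expo_add J J"
      then have "expo_emb s - expo_emb vg = 2 *\<^sub>R (expo_emb I - expo_emb J)"
        using s(2) ev by (simp add: emb_add algebra_simps scaleR_2)
      then have l2: "lnn ?ws (2 *\<^sub>R (expo_emb I - expo_emb J))" using l by simp
      have "lnn ?ws ((1/2) *\<^sub>R (2 *\<^sub>R (expo_emb I - expo_emb J)))"
        by (rule lnn_scale[OF _ l2]) simp
      then have "lnn ?ws (expo_emb I - expo_emb J)" by simp
      then show False using nI by simp
    qed
  qed
  have badf: "coef (mon (expo_add I J) * f) v = 0"
  proof (rule ccontr)
    assume "coef (mon (expo_add I J) * f) v \<noteq> 0"
    then obtain s where s: "s \<in> supp (coef f)" "expo_emb v = expo_emb (expo_add I J) + expo_emb s"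
      using mon_mult_nz by blast
    have "expo_emb s \<in> NP (supp (coef g))" using fg s(1) by blast
    then have l: "lnn ?ws (expo_emb s - expo_emb vg)" using NP_lnn[OF wn vg(2)] by blast
    have "expo_emb s - expo_emb vg = expo_emb I - expo_emb J"
      using s(2) ev by (simp add: emb_add algebra_simps)
    then show False using l nI by simp
  qed
  have good: "coef (mon (expo_add I I) * g) v = coef g vg"
    unfolding v_def by (rule mon_mult_at)
  have "coef (g * (mon I + mon J) * (mon I + mon J) - mon (expo_add I J) * f) v = coef g vg"
    unfolding uu coef_diff coef_add good badf
    using bad[of "expo_add I J"] bad[of "expo_add J I"] bad[of "expo_add J J"] by simp
  then show "expo_add (expo_add I I) vg \<in> supp (coef (g * (mon I + mon J) * (mon I + mon J) - mon (expo_add I J) * f))"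
    using vg(1) by (simp add: supp_def v_def)
  have aIJ: "inner a (expo_emb I) \<le> inner a (expo_emb J)"
    using lnn_first[OF lpos_imp_lnn[OF IJ]] by (simp add: inner_diff_right)
  show "\<forall>z\<in>supp (coef (g * (mon I + mon J) * (mon I + mon J))).
           inner a (expo_emb (expo_add (expo_add I I) vg)) \<le> inner a (expo_emb z)"
  proof
    fix z assume z: "z \<in> supp (coef (g * (mon I + mon J) * (mon I + mon J)))"
    have "\<exists>E s. s \<in> supp (coef g) \<and> expo_emb z = expo_emb E + expo_emb s \<and>
       (E = expo_add I I \<or> E = expo_add I J \<or> E = expo_add J I \<or> E = expo_add J J)"
    proof (rule ccontr)
      assume nex: "\<not> ?thesis"
      have "coef (mon E * g) z = 0" if "E = expo_add I I \<or> E = expo_add I J \<or> E = expo_add J I \<or> E = expo_add J J" for E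
        using mon_mult_nz[of E g z] nex that by blast
      then have "coef (g * (mon I + mon J) * (mon I + mon J)) z = 0"
        unfolding uu coef_add by simp
      then show False using z by (simp add: supp_def)
    qed
    then obtain E s where Es: "s \<in> supp (coef g)" "expo_emb z = expo_emb E + expo_emb s"
      "E = expo_add I I \<or> E = expo_add I J \<or> E = expo_add J I \<or> E = expo_add J J" by blast
    have "0 \<le> inner a (expo_emb s - expo_emb vg)" using vg(2) Es(1) lnn_first by blast
    then have as: "inner a (expo_emb vg) \<le> inner a (expo_emb s)" by (simp add: inner_diff_right)
    have iE: "inner a (expo_emb (expo_add A B)) = inner a (expo_emb A) + inner a (expo_emb B)" for A B
      by (simp only: emb_add inner_add_right)
    have aE: "inner a (expo_emb I) + inner a (expo_emb I) \<le> inner a (expo_emb E)"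
    proof -
      consider "E = expo_add I I" | "E = expo_add I J" | "E = expo_add J I" | "E = expo_add J J"
        using Es(3) by blast
      then show ?thesis
      proof cases
        case 1
        then have "inner a (expo_emb E) = inner a (expo_emb I) + inner a (expo_emb I)" using iE[of I I] by simp
        then show ?thesis using aIJ by linarith
      next
        case 2
        then have "inner a (expo_emb E) = inner a (expo_emb I) + inner a (expo_emb J)" using iE[of I J] by simp
        then show ?thesis using aIJ by linarith
      next
        case 3
        then have "inner a (expo_emb E) = inner a (expo_emb J) + inner a (expo_emb I)" using iE[of J I] by simp
        then show ?thesis using aIJ by linarith
      next
        case 4
        then have "inner a (expo_emb E) = inner a (expo_emb J) + inner a (expo_emb J)" using iE[of J J] by simp
        then show ?thesis using aIJ by linarith
      qed
    qed
    show "inner a (expo_emb (expo_add (expo_add I I) vg)) \<le> inner a (expo_emb z)"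
      using as aE Es(2) iE[of "expo_add I I" vg] iE[of I I] by (simp only: inner_add_right)
  qed
qed

lemma core:
  fixes f g :: "('n::finite,'k::field) ps"
  assumes IJ: "I \<noteq> J" and gnz: "g \<noteq> 0"
    and fg: "expo_emb ` supp (coef f) \<subseteq> NP (supp (coef g))"
  shows "expo_emb ` supp (coef (g * (mon I + mon J) * (mon I + mon J)))
      \<subseteq> NP (supp (coef (g * (mon I + mon J) * (mon I + mon J) - mon (expo_add I J) * f)))"
proof
  fix x assume "x \<in> expo_emb ` supp (coef (g * (mon I + mon J) * (mon I + mon J)))"
  then obtain z where z: "z \<in> supp (coef (g * (mon I + mon J) * (mon I + mon J)))" "x = expo_emb z" by blast
  let ?h = "g * (mon I + mon J) * (mon I + mon J) - mon (expo_add I J) * f"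
  show "x \<in> NP (supp (coef ?h))"
  proof (rule ccontr)
    assume nx: "x \<notin> NP (supp (coef ?h))"
    obtain a where a: "\<forall>i. 0 \<le> a$i" "\<forall>y\<in>NP (supp (coef ?h)). inner a x < inner a y"
      using sep[OF nx] by blast
    have g: "good_ws (a # uvs)" using a(1) by (rule good_ws_a)
    have wn: "\<forall>w\<in>set (a # uvs). \<forall>i. 0 \<le> w$i" using g by (simp add: good_ws_def)
    obtain vg where vg: "vg \<in> supp (coef g)" "\<forall>s\<in>supp (coef g). lnn (a # uvs) (expo_emb s - expo_emb vg)"
      using lex_min[OF wn] gnz by (auto simp: ps_nonzero_supp)
    have "expo_emb J - expo_emb I \<noteq> 0" using IJ by (simp add: emb_inj)
    then have "lpos (a # uvs) (expo_emb J - expo_emb I) \<or> lpos (a # uvs) (expo_emb I - expo_emb J)"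
      using good_lpos_or[OF g] by fastforce
    then obtain v where v: "v \<in> supp (coef ?h)" "inner a (expo_emb v) \<le> inner a x"
    proof
      assume l: "lpos (a # uvs) (expo_emb J - expo_emb I)"
      show ?thesis using core_helper[OF g l vg fg] z that by blast
    next
      assume l: "lpos (a # uvs) (expo_emb I - expo_emb J)"
      have c1: "mon I + mon J = (mon J + mon I :: ('n,'k) ps)" by (simp add: add.commute)
      have c2: "expo_add J I = expo_add I J" by (simp add: expo_add_def add.commute)
      show ?thesis using core_helper[OF g l vg fg] z that unfolding c1[symmetric] c2 by blast
    qed
    have "expo_emb v \<in> NP (supp (coef ?h))" using v(1) by (rule emb_in_NP)
    then have "inner a x < inner a (expo_emb v)" using a(2) by blast
    then show False using v(2) by simp
  qed
qed

subsection \<open>Vertices and the order condition\<close>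

lemma emb_vertices_NP: "expo_emb ` newton_vertices S \<subseteq> NP S"
  by (auto simp: newton_vertices_def extreme_point_of_def)

lemma NP_vertices: "NP (newton_vertices (S::('n::finite) expo set)) = NP S"
proof
  show "NP (newton_vertices S) \<subseteq> NP S" using emb_vertices_NP by (rule NP_subset)
  show "NP S \<subseteq> NP (newton_vertices S)"
  proof (rule NP_subset, rule image_subsetI)
    fix s assume s: "s \<in> S"
    show "expo_emb s \<in> NP (newton_vertices S)"
    proof (rule ccontr)
      assume nz: "expo_emb s \<notin> NP (newton_vertices S)"
      obtain w where w: "\<forall>i. 0 \<le> w$i" "\<forall>x\<in>NP (newton_vertices S). inner w (expo_emb s) < inner w x"
        using sep[OF nz] by blast
      have g: "good_ws (w # uvs)" using w(1) by (rule good_ws_a)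
      have wn: "\<forall>w\<in>set (w # uvs). \<forall>i. 0 \<le> w$i" using g by (simp add: good_ws_def)
      have ne: "S \<noteq> {}" using s by blast
      obtain v where v: "v \<in> S" "\<forall>s\<in>S. lnn (w # uvs) (expo_emb s - expo_emb v)"
        using lex_min[OF wn ne] by blast
      have "v \<in> newton_vertices S" using lex_vertex[OF g v] .
      then have "expo_emb v \<in> NP (newton_vertices S)" by (rule emb_in_NP)
      then have "inner w (expo_emb s) < inner w (expo_emb v)" using w(2) by blast
      moreover have "lnn (w # uvs) (expo_emb s - expo_emb v)" using v(2) s by blast
      then have "0 \<le> inner w (expo_emb s - expo_emb v)" by (rule lnn_first)
      ultimately show False by (simp add: inner_diff_right)
    qed
  qed
qed

lemma vertices_cong: "NP A = NP B \<Longrightarrow> newton_vertices A = newton_vertices B"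
  by (simp add: newton_vertices_def)

lemma NP_union_vertices:
  "NP (newton_vertices A \<union> newton_vertices B) = NP (A \<union> (B::('n::finite) expo set))"
proof
  show "NP (newton_vertices A \<union> newton_vertices B) \<subseteq> NP (A \<union> B)"
  proof (rule NP_subset)
    have "expo_emb ` newton_vertices A \<subseteq> NP (A \<union> B)"
      using emb_vertices_NP[of A] NP_mono[of A "A \<union> B"] by blast
    moreover have "expo_emb ` newton_vertices B \<subseteq> NP (A \<union> B)"
      using emb_vertices_NP[of B] NP_mono[of B "A \<union> B"] by blast
    ultimately show "expo_emb ` (newton_vertices A \<union> newton_vertices B) \<subseteq> NP (A \<union> B)"
      by (simp add: image_Un)
  qed
  show "NP (A \<union> B) \<subseteq> NP (newton_vertices A \<union> newton_vertices B)"
  proof (rule NP_subset)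
    have "expo_emb ` A \<subseteq> NP (newton_vertices A \<union> newton_vertices B)"
    proof -
      have "expo_emb ` A \<subseteq> NP A" by (auto intro: emb_in_NP)
      also have "\<dots> = NP (newton_vertices A)" by (simp add: NP_vertices)
      also have "\<dots> \<subseteq> NP (newton_vertices A \<union> newton_vertices B)" by (rule NP_mono) blast
      finally show ?thesis .
    qed
    moreover have "expo_emb ` B \<subseteq> NP (newton_vertices A \<union> newton_vertices B)"
    proof -
      have "expo_emb ` B \<subseteq> NP B" by (auto intro: emb_in_NP)
      also have "\<dots> = NP (newton_vertices B)" by (simp add: NP_vertices)
      also have "\<dots> \<subseteq> NP (newton_vertices A \<union> newton_vertices B)" by (rule NP_mono) blast
      finally show ?thesis .
    qed
    ultimately show "expo_emb ` (A \<union> B) \<subseteq> NP (newton_vertices A \<union> newton_vertices B)"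
      by (simp add: image_Un)
  qed
qed

lemma vb_times_one: "vb_times a vb_one = newton_vertices a"
proof -
  have "{expo_add A B | A B. A \<in> a \<and> B \<in> vb_one} = a"
    by (auto simp: vb_one_def expo_add_def expo_zero_def)
  then show ?thesis by (simp add: vb_times_def)
qed

lemma vv: "newton_vertices (newton_vertices (S::('n::finite) expo set)) = newton_vertices S"
  by (rule vertices_cong) (rule NP_vertices)

lemma vb_le_one_iff:
  "vb_frac_le (trop f, trop g) (vb_one, vb_one) \<longleftrightarrow> expo_emb ` supp f \<subseteq> NP (supp (g::('n::finite,'k::field) mps))"
proof -
  have "vb_frac_le (trop f, trop g) (vb_one, vb_one) \<longleftrightarrow>
      newton_vertices (newton_vertices (supp f) \<union> newton_vertices (supp g)) = newton_vertices (supp g)"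
    by (simp add: vb_frac_le_def vb_plus_def vb_times_one trop_def vv)
  also have "\<dots> \<longleftrightarrow> newton_vertices (supp f \<union> supp g) = newton_vertices (supp g)"
    using vertices_cong[OF NP_union_vertices[of "supp f" "supp g"]] by simp
  also have "\<dots> \<longleftrightarrow> expo_emb ` supp f \<subseteq> NP (supp g)"
    using vertices_hyp vertices_union by blast
  finally show ?thesis .
qed

subsection \<open>Fractions\<close>

abbreviation cls :: "('n::finite,'k::field) ps \<Rightarrow> ('n,'k) ps \<Rightarrow> (('n,'k) mps \<times> ('n,'k) mps) set" where
  "cls x y \<equiv> frac_class (coef x) (coef y)"

lemma coef_eq_zero: "coef x = mps_zero \<longleftrightarrow> x = 0"
  by (simp add: ps_eq_iff coef_zero)

lemma mps_mult_coef: "mps_mult (coef x) (coef y) = coef (x * y)"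
  by (simp add: coef_mult)

lemma mem_cls: "(coef p, coef q) \<in> cls x y \<longleftrightarrow> q \<noteq> 0 \<and> x * q = p * y"
  by (simp add: frac_class_def coef_eq_zero mps_mult_coef ps_eq_iff)

lemma mem_cls': "(p, q) \<in> cls x y \<longleftrightarrow> Abs_ps q \<noteq> 0 \<and> x * Abs_ps q = Abs_ps p * y"
  using mem_cls[of "Abs_ps p" "Abs_ps q" x y] by simp

lemma cls_eq:
  assumes "y \<noteq> 0" "y' \<noteq> 0"
  shows "cls x y = cls x' y' \<longleftrightarrow> x * y' = x' * y"
proof
  assume "cls x y = cls x' y'"
  moreover have "(coef x, coef y) \<in> cls x y" using assms(1) by (simp add: mem_cls)
  ultimately have "(coef x, coef y) \<in> cls x' y'" by simp
  then show "x * y' = x' * y" by (simp add: mem_cls)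
next
  assume e: "x * y' = x' * y"
  show "cls x y = cls x' y'"
  proof (rule Set.set_eqI)
    fix pq :: "('a,'b) mps \<times> ('a,'b) mps"
    obtain p q where pq: "pq = (coef p, coef q)" by (metis Abs_ps_inv prod.exhaust)
    have "x * q = p * y \<longleftrightarrow> x' * q = p * y'"
    proof
      assume "x * q = p * y"
      then have "(x * y') * q = (p * y') * y" by (metis mult.assoc mult.commute)
      then have "(x' * q) * y = (p * y') * y" using e by (simp add: ac_simps)
      then show "x' * q = p * y'" using assms(1) by simp
    next
      assume "x' * q = p * y'"
      then have "(x' * y) * q = (p * y) * y'" by (metis mult.assoc mult.commute)
      then have "(x * q) * y' = (p * y) * y'" using e by (simp add: ac_simps)
      then show "x * q = p * y" using assms(2) by simp
    qed
    then show "pq \<in> cls x y \<longleftrightarrow> pq \<in> cls x' y'" by (simp add: pq mem_cls)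
  qed
qed

lemma mem_cls_eq:
  assumes "y \<noteq> 0" "(coef p, coef q) \<in> cls x y"
  shows "cls p q = cls x y"
  using assms by (simp add: mem_cls cls_eq)

lemma frac_rep_cls:
  assumes "y \<noteq> 0"
  obtains x0 y0 where "frac_rep (cls x y) = (coef x0, coef y0)" "y0 \<noteq> 0" "x * y0 = x0 * y"
proof -
  have "(coef x, coef y) \<in> cls x y" using assms by (simp add: mem_cls)
  then have "frac_rep (cls x y) \<in> cls x y" unfolding frac_rep_def by (rule someI)
  moreover obtain x0 y0 where "frac_rep (cls x y) = (coef x0, coef y0)"
    by (metis Abs_ps_inv prod.exhaust)
  ultimately show ?thesis using that by (simp add: mem_cls)
qed

lemma frac_add_cls:
  assumes "y \<noteq> 0" "y' \<noteq> 0"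
  shows "frac_add (cls x y) (cls x' y') = cls (x * y' + x' * y) (y * y')"
proof -
  obtain x0 y0 where r: "frac_rep (cls x y) = (coef x0, coef y0)" "y0 \<noteq> 0" "x * y0 = x0 * y"
    using frac_rep_cls[OF assms(1)] by blast
  obtain x1 y1 where r': "frac_rep (cls x' y') = (coef x1, coef y1)" "y1 \<noteq> 0" "x' * y1 = x1 * y'"
    using frac_rep_cls[OF assms(2)] by blast
  have "frac_add (cls x y) (cls x' y') = cls (x0 * y1 + x1 * y0) (y0 * y1)"
    by (simp add: frac_add_def r r' mps_add_def coef_add mps_mult_coef plus_ps_def)
  also have "\<dots> = cls (x * y' + x' * y) (y * y')"
  proof (subst cls_eq)
    show "y0 * y1 \<noteq> 0" "y * y' \<noteq> 0" using r r' assms by auto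
    have "(x0 * y1 + x1 * y0) * (y * y') = (x0 * y) * (y1 * y') + (x1 * y') * (y0 * y)"
      by (simp add: algebra_simps)
    also have "\<dots> = (x * y0) * (y1 * y') + (x' * y1) * (y0 * y)" using r r' by simp
    also have "\<dots> = (x * y' + x' * y) * (y0 * y1)" by (simp add: algebra_simps)
    finally show "(x0 * y1 + x1 * y0) * (y * y') = (x * y' + x' * y) * (y0 * y1)" .
  qed
  finally show ?thesis .
qed

lemma frac_mult_cls:
  assumes "y \<noteq> 0" "y' \<noteq> 0"
  shows "frac_mult (cls x y) (cls x' y') = cls (x * x') (y * y')"
proof -
  obtain x0 y0 where r: "frac_rep (cls x y) = (coef x0, coef y0)" "y0 \<noteq> 0" "x * y0 = x0 * y"
    using frac_rep_cls[OF assms(1)] by blast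
  obtain x1 y1 where r': "frac_rep (cls x' y') = (coef x1, coef y1)" "y1 \<noteq> 0" "x' * y1 = x1 * y'"
    using frac_rep_cls[OF assms(2)] by blast
  have "frac_mult (cls x y) (cls x' y') = cls (x0 * x1) (y0 * y1)"
    by (simp add: frac_mult_def r r' mps_mult_coef)
  also have "\<dots> = cls (x * x') (y * y')"
  proof (subst cls_eq)
    show "y0 * y1 \<noteq> 0" "y * y' \<noteq> 0" using r r' assms by auto
    have "(x0 * x1) * (y * y') = (x0 * y) * (x1 * y')" by (simp add: algebra_simps)
    also have "\<dots> = (x * y0) * (x' * y1)" using r r' by simp
    also have "\<dots> = (x * x') * (y0 * y1)" by (simp add: algebra_simps)
    finally show "(x0 * x1) * (y * y') = (x * x') * (y0 * y1)" .
  qed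
  finally show ?thesis .
qed

lemma frac_one_cls: "frac_one = cls 1 1"
  by (simp add: frac_one_def coef_one)

lemma frac_zero_cls: "frac_zero = cls 0 1"
  by (simp add: frac_zero_def coef_one coef_zero)

lemma laurent_field_cls: "X \<in> laurent_field \<longleftrightarrow> (\<exists>x y. y \<noteq> 0 \<and> X = cls x y)"
proof
  assume "X \<in> laurent_field"
  then obtain f g where "X = frac_class f g" "g \<noteq> mps_zero" by (auto simp: laurent_field_def)
  then show "\<exists>x y. y \<noteq> 0 \<and> X = cls x y"
    by (intro exI[of _ "Abs_ps f"] exI[of _ "Abs_ps g"]) (simp add: coef_eq_zero[symmetric])
next
  assume "\<exists>x y. y \<noteq> 0 \<and> X = cls x y"
  then obtain x y where "y \<noteq> 0" "X = cls x y" by blast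
  then have "coef y \<noteq> mps_zero" "X = frac_class (coef x) (coef y)" by (auto simp: coef_eq_zero)
  then show "X \<in> laurent_field" unfolding laurent_field_def by blast
qed

lemma circ_I:
  assumes "y \<noteq> 0" "expo_emb ` supp (coef x) \<subseteq> NP (supp (coef y))"
  shows "cls x y \<in> laurent_circ"
proof -
  have "vb_frac_le (trop (coef x), trop (coef y)) (vb_one, vb_one)" using assms(2) by (simp add: vb_le_one_iff)
  moreover have "(coef x, coef y) \<in> cls x y" using assms by (simp add: mem_cls)
  moreover have "cls x y \<in> laurent_field" using assms by (auto simp: laurent_field_cls)
  ultimately show "cls x y \<in> laurent_circ" unfolding laurent_circ_def by blast
qed

lemma circ_E:
  assumes "X \<in> laurent_circ"
  obtains x y where "y \<noteq> 0" "X = cls x y" "expo_emb ` supp (coef x) \<subseteq> NP (supp (coef y))"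
proof -
  obtain f g where fg: "(f, g) \<in> X" "vb_frac_le (trop f, trop g) (vb_one, vb_one)" "X \<in> laurent_field"
    using assms by (auto simp: laurent_circ_def)
  obtain x0 y0 where X: "y0 \<noteq> 0" "X = cls x0 y0" using fg(3) by (auto simp: laurent_field_cls)
  define p q where "p = Abs_ps f" and "q = Abs_ps g"
  have fg': "(coef p, coef q) \<in> cls x0 y0" using fg(1) X by (simp add: p_def q_def)
  then have q: "q \<noteq> 0" by (simp add: mem_cls)
  have "cls p q = X" using mem_cls_eq[OF X(1) fg'] X(2) by simp
  moreover have "expo_emb ` supp (coef p) \<subseteq> NP (supp (coef q))"
    using fg(2) by (simp add: vb_le_one_iff p_def q_def)
  ultimately show ?thesis using that q by blast
qed

lemma R_simps:
  "carrier laurent_circ_ring = laurent_circ"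
  "monoid.mult laurent_circ_ring = frac_mult"
  "one laurent_circ_ring = frac_one"
  "zero laurent_circ_ring = frac_zero"
  "add laurent_circ_ring = frac_add"
  by (simp_all add: laurent_circ_ring_def)

definition xx :: "'n expo \<Rightarrow> 'n expo \<Rightarrow> (('n::finite, 'k::field) mps \<times> ('n, 'k) mps) set" where
  "xx I J = cls (mon I) (mon I + mon J)"

lemma coef_add_fun: "coef (x + y) = mps_add (coef x) (coef y)"
  by (simp add: plus_ps_def)

lemma mord_xx: "mord M I J \<longleftrightarrow> xx I J \<notin> M"
  by (simp add: mord_def xx_def coef_add_fun coef_mon)

lemma u_coef: "coef (mon I + mon J :: ('n::finite,'k::field_char_0) ps) I \<noteq> 0"
  by (simp add: coef_add coef_mon monom_t_def)

lemma u_nz: "(mon I + mon J :: ('n::finite,'k::field_char_0) ps) \<noteq> 0"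
proof
  assume h: "(mon I + mon J :: ('n,'k) ps) = 0"
  have "coef (mon I + mon J :: ('n,'k) ps) I = 0" unfolding h by (simp add: coef_zero mps_zero_def)
  with u_coef show False by blast
qed

lemma supp_mon: "supp (coef (mon I :: ('n::finite,'k::field) ps)) = {I}"
  by (auto simp: supp_def coef_mon monom_t_def)

lemma xx_circ: "(xx I J :: (('n::finite,'k::field_char_0) mps \<times> _) set) \<in> laurent_circ"
  unfolding xx_def
proof (rule circ_I[OF u_nz])
  have "I \<in> supp (coef (mon I + mon J :: ('n,'k) ps))" using u_coef by (simp add: supp_def)
  then show "expo_emb ` supp (coef (mon I :: ('n,'k) ps)) \<subseteq> NP (supp (coef (mon I + mon J :: ('n,'k) ps)))"
    by (simp add: supp_mon emb_in_NP)
qed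

lemma xx_sum: "frac_add (xx I J) (xx J I :: (('n::finite,'k::field_char_0) mps \<times> _) set) = frac_one"
proof -
  have "frac_add (xx I J) (xx J I :: (('n,'k) mps \<times> _) set) =
     cls (mon I * (mon J + mon I) + mon J * (mon I + mon J)) ((mon I + mon J) * (mon J + mon I) :: ('n,'k) ps)"
    unfolding xx_def by (rule frac_add_cls[OF u_nz u_nz])
  also have "\<dots> = cls 1 1"
  proof -
    have nz: "(mon I + mon J) * (mon J + mon I) \<noteq> (0 :: ('n,'k) ps)" using u_nz[of I J] u_nz[of J I] by simp
    show ?thesis by (subst cls_eq[OF nz one_neq_zero]) (simp add: algebra_simps)
  qed
  finally show ?thesis by (simp add: frac_one_cls)
qed

lemma xx_shift: "(xx (expo_add I L) (expo_add J L) :: (('n::finite,'k::field_char_0) mps \<times> _) set) = xx I J"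
  unfolding xx_def
proof (subst cls_eq[OF u_nz u_nz])
  show "mon (expo_add I L) * (mon I + mon J) = mon I * (mon (expo_add I L) + mon (expo_add J L) :: ('n,'k) ps)"
    by (simp add: algebra_simps flip: mon_mult_mon)
qed

lemma xx_prod3:
  "frac_mult (frac_mult (xx I J) (xx J L)) (xx L I) =
   (frac_mult (frac_mult (xx J I) (xx L J)) (xx I L) :: (('n::finite,'k::field_char_0) mps \<times> _) set)"
proof -
  have nz: "(mon A + mon B) * (mon C + mon D) \<noteq> (0 :: ('n,'k) ps)" for A B C D
    using u_nz[of A B] u_nz[of C D] by simp
  have nz3: "(mon A + mon B) * (mon C + mon D) * (mon E + mon F) \<noteq> (0 :: ('n,'k) ps)" for A B C D E F
    using u_nz[of A B] u_nz[of C D] u_nz[of E F] by simp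
  show ?thesis
    unfolding xx_def
    apply (simp only: frac_mult_cls[OF u_nz u_nz] frac_mult_cls[OF nz u_nz])
    apply (subst cls_eq[OF nz3 nz3])
    apply (simp add: algebra_simps)
    done
qed

type_synonym ('n, 'k) fr = "(('n, 'k) mps \<times> ('n, 'k) mps) set"

lemma ring_R:
  fixes M :: "('n::finite,'k::field_char_0) fr set"
  shows "maximalideal M laurent_circ_ring \<Longrightarrow> ring (laurent_circ_ring :: ('n,'k) fr ring)"
  using maximalideal.axioms(1) ideal.axioms(2) by blast

lemma cring_R:
  fixes M :: "('n::finite,'k::field_char_0) fr set"
  assumes "maximalideal M laurent_circ_ring"
  shows "cring (laurent_circ_ring :: ('n,'k) fr ring)"
proof -
  interpret ring "laurent_circ_ring :: ('n,'k) fr ring" using ring_R[OF assms] .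
  have "comm_monoid (laurent_circ_ring :: ('n,'k) fr ring)"
  proof (rule monoid_comm_monoidI)
    fix x y :: "('n,'k) fr"
    assume x: "x \<in> carrier laurent_circ_ring" and y: "y \<in> carrier laurent_circ_ring"
    obtain a b where ab: "b \<noteq> 0" "x = cls a b" using x by (auto simp: R_simps elim: circ_E)
    obtain c d where cd: "d \<noteq> 0" "y = cls c d" using y by (auto simp: R_simps elim: circ_E)
    show "x \<otimes>\<^bsub>laurent_circ_ring\<^esub> y = y \<otimes>\<^bsub>laurent_circ_ring\<^esub> x"
      using ab cd by (simp add: R_simps frac_mult_cls mult.commute)
  qed
  then show ?thesis unfolding cring_def using ring_R[OF assms] by blast
qed

lemma NP_empty: "NP {} = {}"
  by (simp add: newton_polyhedron_def)

lemma one_notin: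
  fixes M :: "('n::finite,'k::field_char_0) fr set"
  assumes mx: "maximalideal M laurent_circ_ring"
  shows "frac_one \<notin> M"
proof
  assume "frac_one \<in> M"
  interpret maximalideal M "laurent_circ_ring :: ('n,'k) fr ring" by (rule mx)
  have "\<one>\<^bsub>laurent_circ_ring\<^esub> \<in> M" using \<open>frac_one \<in> M\<close> by (simp add: R_simps)
  then have "M = carrier laurent_circ_ring" by (rule one_imp_carrier)
  then show False using I_notcarr by simp
qed

lemma xx_total:
  fixes M :: "('n::finite,'k::field_char_0) fr set"
  assumes mx: "maximalideal M laurent_circ_ring"
  shows "xx I J \<notin> M \<or> xx J I \<notin> M"
proof (rule ccontr)
  assume "\<not> ?thesis"
  then have a: "xx I J \<in> M" "xx J I \<in> M" by auto
  interpret maximalideal M "laurent_circ_ring :: ('n,'k) fr ring" by (rule mx)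
  have "frac_add (xx I J) (xx J I) \<in> M"
    using additive_subgroup.a_closed[OF is_additive_subgroup a] by (simp add: R_simps)
  then have "frac_one \<in> M" unfolding xx_sum .
  then show False using one_notin[OF mx] by blast
qed

lemma xx_zero:
  fixes M :: "('n::finite,'k::field_char_0) fr set"
  assumes mx: "maximalideal M laurent_circ_ring"
  shows "(xx expo_zero J :: ('n,'k) fr) \<notin> M"
proof
  assume x: "(xx expo_zero J :: ('n,'k) fr) \<in> M"
  interpret maximalideal M "laurent_circ_ring :: ('n,'k) fr ring" by (rule mx)
  define w :: "('n,'k) fr" where "w = cls (1 + mon J) 1"
  have "expo_emb ` supp (coef (1 + mon J :: ('n,'k) ps)) \<subseteq> NP (supp (coef (1::('n,'k) ps)))"
  proof (rule image_subsetI)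
    fix s
    have "expo_emb expo_zero + expo_emb s \<in> NP (supp (coef (1::('n,'k) ps)))"
      by (intro NP_upward emb_in_NP) (auto simp: coef_one supp_def monom_t_def emb_nonneg)
    then show "expo_emb s \<in> NP (supp (coef (1::('n,'k) ps)))" by (simp add: emb_zero)
  qed
  then have wc: "w \<in> laurent_circ" unfolding w_def by (rule circ_I[OF one_neq_zero])
  have wc': "w \<in> carrier laurent_circ_ring" using wc by (simp add: R_simps)
  have nz: "(1 + mon J :: ('n,'k) ps) \<noteq> 0" using u_nz[of expo_zero J] by (simp add: mon_zero)
  have "frac_mult (xx expo_zero J) w = cls (1 * (1 + mon J)) ((1 + mon J) * 1 :: ('n,'k) ps)"
    unfolding xx_def w_def mon_zero by (rule frac_mult_cls[OF nz one_neq_zero])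
  also have "\<dots> = cls 1 1" using nz by (subst cls_eq) simp_all
  finally have "frac_mult (xx expo_zero J) w = frac_one" by (simp add: frac_one_cls)
  moreover have "frac_mult (xx expo_zero J) w \<in> M" using I_r_closed[OF x wc'] by (simp add: R_simps)
  ultimately have "frac_one \<in> M" by simp
  then show False using one_notin[OF mx] by blast
qed

lemma xx_antisym:
  fixes M :: "('n::finite,'k::field_char_0) fr set"
  assumes mx: "maximalideal M laurent_circ_ring" and IJ: "I \<noteq> J"
    and nx: "xx I J \<notin> M" and ny: "xx J I \<notin> M"
  shows False
proof -
  let ?R = "laurent_circ_ring :: ('n,'k) fr ring"
  interpret cring ?R by (rule cring_R[OF mx])
  interpret maximalideal M ?R by (rule mx)
  have prime: "primeideal M ?R" by (rule maximalideal_prime[OF mx])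
  define z where "z = frac_mult (xx I J) (xx J I :: ('n,'k) fr)"
  have xc: "xx I J \<in> carrier ?R" "xx J I \<in> carrier ?R" using xx_circ by (simp_all add: R_simps)
  have zc: "z \<in> carrier ?R" using m_closed[OF xc] by (simp add: z_def R_simps)
  have zM: "z \<notin> M" using primeideal.I_prime[OF prime xc] nx ny by (auto simp: z_def R_simps)
  have idl: "ideal (M <+>\<^bsub>?R\<^esub> PIdl\<^bsub>?R\<^esub> z) ?R"
    by (rule add_ideals[OF is_ideal cgenideal_ideal[OF zc]])
  have sub: "M \<subseteq> M <+>\<^bsub>?R\<^esub> PIdl\<^bsub>?R\<^esub> z"
  proof
    fix m assume m: "m \<in> M"
    have "\<zero>\<^bsub>?R\<^esub> \<otimes>\<^bsub>?R\<^esub> z \<in> PIdl\<^bsub>?R\<^esub> z" unfolding cgenideal_def by blast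
    moreover have "m = m \<oplus>\<^bsub>?R\<^esub> (\<zero>\<^bsub>?R\<^esub> \<otimes>\<^bsub>?R\<^esub> z)" using Icarr[OF m] zc by simp
    ultimately show "m \<in> M <+>\<^bsub>?R\<^esub> PIdl\<^bsub>?R\<^esub> z" using m unfolding set_add_def' by blast
  qed
  have zin: "z \<in> M <+>\<^bsub>?R\<^esub> PIdl\<^bsub>?R\<^esub> z"
  proof -
    have "\<one>\<^bsub>?R\<^esub> \<otimes>\<^bsub>?R\<^esub> z \<in> PIdl\<^bsub>?R\<^esub> z" unfolding cgenideal_def by blast
    moreover have "z = \<zero>\<^bsub>?R\<^esub> \<oplus>\<^bsub>?R\<^esub> (\<one>\<^bsub>?R\<^esub> \<otimes>\<^bsub>?R\<^esub> z)" using zc by simp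
    moreover have "\<zero>\<^bsub>?R\<^esub> \<in> M" by (rule additive_subgroup.zero_closed[OF is_additive_subgroup])
    ultimately show ?thesis unfolding set_add_def' by blast
  qed
  have car: "M <+>\<^bsub>?R\<^esub> PIdl\<^bsub>?R\<^esub> z \<subseteq> carrier ?R" using ideal.Icarr[OF idl] by blast
  have "M <+>\<^bsub>?R\<^esub> PIdl\<^bsub>?R\<^esub> z = carrier ?R"
    using I_maximal[OF idl sub car] zin zM by blast
  then have "\<one>\<^bsub>?R\<^esub> \<in> M <+>\<^bsub>?R\<^esub> PIdl\<^bsub>?R\<^esub> z" by simp
  then obtain m r where m: "m \<in> M" and r: "r \<in> carrier ?R"
    and one: "\<one>\<^bsub>?R\<^esub> = m \<oplus>\<^bsub>?R\<^esub> (r \<otimes>\<^bsub>?R\<^esub> z)"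
    unfolding set_add_def' cgenideal_def by blast
  have mc: "m \<in> laurent_circ" using Icarr[OF m] by (simp add: R_simps)
  obtain f g where fg: "g \<noteq> 0" "r = cls f g" "expo_emb ` supp (coef f) \<subseteq> NP (supp (coef g))"
    using r by (auto simp: R_simps elim: circ_E)
  obtain p q where pq: "q \<noteq> 0" "m = cls p q" using mc by (auto elim: circ_E)
  define u :: "('n,'k) ps" where "u = mon I + mon J"
  have unz: "u \<noteq> 0" unfolding u_def by (rule u_nz)
  have xJI: "xx J I = cls (mon J) u" by (simp add: xx_def u_def add.commute)
  have z_eq: "z = cls (mon I * mon J) (u * u)"
    unfolding z_def xJI unfolding xx_def u_def[symmetric] by (rule frac_mult_cls[OF unz unz])
  have uu: "u * u \<noteq> 0" using unz by simp
  have rz: "frac_mult r z = cls (f * (mon I * mon J)) (g * (u * u))"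
    unfolding fg(2) z_eq by (rule frac_mult_cls[OF fg(1) uu])
  have guu: "g * (u * u) \<noteq> 0" using fg(1) uu by simp
  have "frac_add m (frac_mult r z) = cls (p * (g * (u * u)) + f * (mon I * mon J) * q) (q * (g * (u * u)))"
    unfolding pq(2) rz by (rule frac_add_cls[OF pq(1) guu])
  moreover have "frac_add m (frac_mult r z) = cls 1 1" using one by (simp add: R_simps frac_one_cls)
  ultimately have "cls (p * (g * (u * u)) + f * (mon I * mon J) * q) (q * (g * (u * u))) = cls 1 1" by simp
  then have e: "(p * (g * (u * u)) + f * (mon I * mon J) * q) * 1 = 1 * (q * (g * (u * u)))"
    using pq(1) guu by (subst (asm) cls_eq) simp_all
  define G where "G = g * (mon I + mon J) * (mon I + mon J)"
  define h where "h = G - mon (expo_add I J) * f"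
  have GG: "G = g * (u * u)" by (simp add: G_def u_def mult.assoc)
  have Gnz: "G \<noteq> 0" using guu GG by simp
  have ph: "p * G = q * h"
  proof -
    have "p * G + f * (mon I * mon J) * q = q * G" using e GG by simp
    then show ?thesis by (simp add: h_def algebra_simps mon_mult_mon)
  qed
  have core': "expo_emb ` supp (coef G) \<subseteq> NP (supp (coef h))"
    unfolding G_def h_def by (rule core[OF IJ fg(1) fg(3)])
  have hnz: "h \<noteq> 0"
  proof
    assume "h = 0"
    then have "supp (coef h) = {}" by (simp add: coef_zero supp_def mps_zero_def)
    then have "supp (coef G) = {}" using core' NP_empty by auto
    then show False using Gnz by (simp add: ps_nonzero_supp)
  qed
  have m_eq: "m = cls h G" unfolding pq(2) using ph by (subst cls_eq[OF pq(1) Gnz]) (simp add: mult.commute)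
  define w where "w = cls G h"
  have wc: "w \<in> carrier ?R" unfolding w_def using circ_I[OF hnz core'] by (simp add: R_simps)
  have "frac_mult m w = cls (h * G) (G * h)" unfolding m_eq w_def by (rule frac_mult_cls[OF Gnz hnz])
  also have "\<dots> = cls 1 1" using Gnz hnz by (subst cls_eq) (simp_all add: mult.commute)
  finally have "frac_mult m w = frac_one" by (simp add: frac_one_cls)
  moreover have "frac_mult m w \<in> M" using I_r_closed[OF m wc] by (simp add: R_simps)
  ultimately have "frac_one \<in> M" by simp
  then show False using one_notin[OF mx] by blast
qed

lemma xx_trans:
  fixes M :: "('n::finite,'k::field_char_0) fr set"
  assumes mx: "maximalideal M laurent_circ_ring" and ij: "xx I J \<notin> M" and jl: "xx J L \<notin> M"
  shows "xx I L \<notin> M"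
proof
  assume w: "xx I L \<in> M"
  let ?R = "laurent_circ_ring :: ('n,'k) fr ring"
  interpret maximalideal M ?R by (rule mx)
  show False
  proof (cases "I = J \<or> J = L \<or> I = L")
    case True
    then show False using ij jl w xx_total[OF mx, of I I] by auto
  next
    case False
    then have IJ: "I \<noteq> J" and JL: "J \<noteq> L" by auto
    have u: "xx J I \<in> M" using xx_antisym[OF mx IJ ij] by blast
    have v: "xx L J \<in> M" using xx_antisym[OF mx JL jl] by blast
    have cr: "xx A B \<in> carrier ?R" for A B using xx_circ by (simp add: R_simps)
    have ex: "\<exists>m''\<in>M. (x \<oplus>\<^bsub>?R\<^esub> m) \<otimes>\<^bsub>?R\<^esub> (y \<oplus>\<^bsub>?R\<^esub> m') = x \<otimes>\<^bsub>?R\<^esub> y \<oplus>\<^bsub>?R\<^esub> m''"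
      if x: "x \<in> carrier ?R" and y: "y \<in> carrier ?R" and m: "m \<in> M" and m': "m' \<in> M" for x y m m'
    proof -
      have mc: "m \<in> carrier ?R" "m' \<in> carrier ?R" using Icarr m m' by auto
      have "x \<otimes>\<^bsub>?R\<^esub> m' \<oplus>\<^bsub>?R\<^esub> m \<otimes>\<^bsub>?R\<^esub> y \<oplus>\<^bsub>?R\<^esub> m \<otimes>\<^bsub>?R\<^esub> m' \<in> M"
        using I_l_closed[OF m' x] I_r_closed[OF m y] I_r_closed[OF m mc(2)]
        by (intro additive_subgroup.a_closed[OF is_additive_subgroup])
      moreover have "(x \<oplus>\<^bsub>?R\<^esub> m) \<otimes>\<^bsub>?R\<^esub> (y \<oplus>\<^bsub>?R\<^esub> m') =
          x \<otimes>\<^bsub>?R\<^esub> y \<oplus>\<^bsub>?R\<^esub> (x \<otimes>\<^bsub>?R\<^esub> m' \<oplus>\<^bsub>?R\<^esub> m \<otimes>\<^bsub>?R\<^esub> y \<oplus>\<^bsub>?R\<^esub> m \<otimes>\<^bsub>?R\<^esub> m')"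
        using x y mc by (simp add: l_distr r_distr a_ac)
      ultimately show ?thesis by blast
    qed
    let ?a = "xx I J" and ?b = "xx J L" and ?c = "xx L I"
    let ?u = "xx J I" and ?v = "xx L J" and ?w = "xx I L"
    have s1: "?a \<oplus>\<^bsub>?R\<^esub> ?u = \<one>\<^bsub>?R\<^esub>" using xx_sum[of I J] by (simp add: R_simps)
    have s2: "?b \<oplus>\<^bsub>?R\<^esub> ?v = \<one>\<^bsub>?R\<^esub>" using xx_sum[of J L] by (simp add: R_simps)
    have s3: "?c \<oplus>\<^bsub>?R\<^esub> ?w = \<one>\<^bsub>?R\<^esub>" using xx_sum[of L I] by (simp add: R_simps)
    obtain m1 where m1: "m1 \<in> M" "(?a \<oplus>\<^bsub>?R\<^esub> ?u) \<otimes>\<^bsub>?R\<^esub> (?b \<oplus>\<^bsub>?R\<^esub> ?v) = ?a \<otimes>\<^bsub>?R\<^esub> ?b \<oplus>\<^bsub>?R\<^esub> m1"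
      using ex[OF cr cr u v] by blast
    have abc: "?a \<otimes>\<^bsub>?R\<^esub> ?b \<in> carrier ?R" using cr by simp
    obtain m2 where m2: "m2 \<in> M" "(?a \<otimes>\<^bsub>?R\<^esub> ?b \<oplus>\<^bsub>?R\<^esub> m1) \<otimes>\<^bsub>?R\<^esub> (?c \<oplus>\<^bsub>?R\<^esub> ?w) = ?a \<otimes>\<^bsub>?R\<^esub> ?b \<otimes>\<^bsub>?R\<^esub> ?c \<oplus>\<^bsub>?R\<^esub> m2"
      using ex[OF abc cr m1(1) w] by blast
    have p3: "?a \<otimes>\<^bsub>?R\<^esub> ?b \<otimes>\<^bsub>?R\<^esub> ?c = ?u \<otimes>\<^bsub>?R\<^esub> ?v \<otimes>\<^bsub>?R\<^esub> ?w"
      using xx_prod3[of I J L] by (simp add: R_simps)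
    have uvw: "?u \<otimes>\<^bsub>?R\<^esub> ?v \<otimes>\<^bsub>?R\<^esub> ?w \<in> M"
      using I_r_closed[OF I_r_closed[OF u cr] cr] by simp
    have "\<one>\<^bsub>?R\<^esub> = (?a \<oplus>\<^bsub>?R\<^esub> ?u) \<otimes>\<^bsub>?R\<^esub> (?b \<oplus>\<^bsub>?R\<^esub> ?v) \<otimes>\<^bsub>?R\<^esub> (?c \<oplus>\<^bsub>?R\<^esub> ?w)"
      unfolding s1 s2 s3 by simp
    also have "\<dots> = ?u \<otimes>\<^bsub>?R\<^esub> ?v \<otimes>\<^bsub>?R\<^esub> ?w \<oplus>\<^bsub>?R\<^esub> m2"
      unfolding m1(2) m2(2) p3 ..
    finally have "\<one>\<^bsub>?R\<^esub> \<in> M"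
      using additive_subgroup.a_closed[OF is_additive_subgroup uvw m2(1)] by simp
    then have "frac_one \<in> M" by (simp add: R_simps)
    then show False using one_notin[OF mx] by blast
  qed
qed

theorem proposition4p11:
  fixes M :: "(('n::finite, 'k::field_char_0) mps \<times> ('n, 'k) mps) set set"
  assumes "maximalideal M laurent_circ_ring"
  shows "(\<forall>I. mord M I I)
    \<and> (\<forall>I J. mord M I J \<and> mord M J I \<longrightarrow> I = J)
    \<and> (\<forall>I J L. mord M I J \<and> mord M J L \<longrightarrow> mord M I L)
    \<and> (\<forall>I J. mord M I J \<or> mord M J I)
    \<and> (\<forall>J. mord M expo_zero J)
    \<and> (\<forall>I J L. mord M I J \<longrightarrow> mord M (expo_add I L) (expo_add J L))"
proof -
  note mx = assms
  have r: "\<forall>I. mord M I I" unfolding mord_xx using xx_total[OF mx] by blast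
  have a: "\<forall>I J. mord M I J \<and> mord M J I \<longrightarrow> I = J" unfolding mord_xx using xx_antisym[OF mx] by blast
  have t: "\<forall>I J L. mord M I J \<and> mord M J L \<longrightarrow> mord M I L" unfolding mord_xx using xx_trans[OF mx] by blast
  have to: "\<forall>I J. mord M I J \<or> mord M J I" unfolding mord_xx using xx_total[OF mx] by blast
  have z: "\<forall>J. mord M expo_zero J" unfolding mord_xx using xx_zero[OF mx] by blast
  have s: "\<forall>I J L. mord M I J \<longrightarrow> mord M (expo_add I L) (expo_add J L)" unfolding mord_xx xx_shift by blast
  show ?thesis using r a t to z s by blast
qed

end
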